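(* Let $\mathcal H$ be a complex Hilbert space with $\dim\mathcal H\ge n$, let $c=(c_1,\dots,c_n)$ and $\|A\|_c=\sum_{j=1}^n c_js_j(A)$ for $A\in\mathcal B(\mathcal H)$. For parts (a), (b), (c), (e) assume $c$ has positive entries arranged in descending order $c_1\ge\cdots\ge c_n>0$. (a) $\|\cdot\|_c$ is submultiplicative ($\|AB\|_c\le\|A\|_c\|B\|_c$ for all $A,B$) if and only if $c_1\ge1$. (b) $\|\cdot\|_c$ is a cross norm ($\|A\|_c=s_1(A)$ for every rank one $A$) if and only if $c_1=1$. (c) Suppose $c_1\ge1$. There exist nonzero $A,B\in\mathcal B(\mathcal H)$ with $\|AB\|_c=\|A\|_c\|B\|_c$ if and only if $c_1=1$. (d) Suppose $c=(1,0,\dots,0)$. Two nonzero operators $A,B\in\mathcal B(\mathcal H)$ satisfy $\|AB\|_c=\|A\|_c\|B\|_c$ if and only if $s_1(AB)=s_1(A)s_1(B)$. (e) Suppose $n\ge2$, $c_1=1$ and $c_2>0$. Two nonzero operators $A,B\in\mathcal B(\mathcal H)$ satisfy $\|AB\|_c=\|A\|_c\|B\|_c$ if and only if $A=xy^*$ and $B=yz^*$ for some nonzero vectors $x,y,z\in\mathcal H$.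
   Context: $\mathcal B(\mathcal H)$ is the algebra of bounded linear operators on $\mathcal H$; $s_k(A)=\inf\{\|A-X\|_{\rm sp}:\operatorname{rank}X<k\}$ is the $k$th singular value, with $\|\cdot\|_{\rm sp}$ the operator norm. $xy^*$ denotes the operator $v\mapsto\langle v,y\rangle x$. *)

theory Defs
  imports "HOL-Analysis.Analysis"
begin

text \<open>A complex Hilbert space is modelled on a type 'a with an explicit complex scalar
multiplication sc and inner product ip (linear in the first argument, conjugate-linear
in the second), complete for the induced norm.\<close>

definition hnorm :: "('a \<Rightarrow> 'a \<Rightarrow> complex) \<Rightarrow> 'a \<Rightarrow> real" where
  "hnorm ip x = sqrt (Re (ip x x))"

definition chilbert :: "(complex \<Rightarrow> 'a::ab_group_add \<Rightarrow> 'a) \<Rightarrow> ('a \<Rightarrow> 'a \<Rightarrow> complex) \<Rightarrow> bool" where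
  "chilbert sc ip \<longleftrightarrow>
     vector_space sc \<and>
     (\<forall>x y. ip y x = cnj (ip x y)) \<and>
     (\<forall>x y z. ip (x + y) z = ip x z + ip y z) \<and>
     (\<forall>a x y. ip (sc a x) y = a * ip x y) \<and>
     (\<forall>x. 0 \<le> Re (ip x x)) \<and>
     (\<forall>x. ip x x = 0 \<longrightarrow> x = 0) \<and>
     (\<forall>f :: nat \<Rightarrow> 'a.
        (\<forall>e>0. \<exists>N. \<forall>m\<ge>N. \<forall>k\<ge>N. hnorm ip (f m - f k) < e) \<longrightarrow>
        (\<exists>l. (\<lambda>m. hnorm ip (f m - l)) \<longlonglongrightarrow> 0))"

definition bop :: "(complex \<Rightarrow> 'a::ab_group_add \<Rightarrow> 'a) \<Rightarrow> ('a \<Rightarrow> 'a \<Rightarrow> complex) \<Rightarrow> ('a \<Rightarrow> 'a) \<Rightarrow> bool" where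
  "bop sc ip T \<longleftrightarrow>
     (\<forall>x y. T (x + y) = T x + T y) \<and> (\<forall>a x. T (sc a x) = sc a (T x)) \<and>
     (\<exists>K. \<forall>x. hnorm ip (T x) \<le> K * hnorm ip x)"

definition opnorm :: "('a \<Rightarrow> 'a \<Rightarrow> complex) \<Rightarrow> ('a \<Rightarrow> 'a) \<Rightarrow> real" where
  "opnorm ip T = Sup {hnorm ip (T x) | x. hnorm ip x \<le> 1}"

definition rank_lt :: "(complex \<Rightarrow> 'a::ab_group_add \<Rightarrow> 'a) \<Rightarrow> ('a \<Rightarrow> 'a) \<Rightarrow> nat \<Rightarrow> bool" where
  "rank_lt sc X k \<longleftrightarrow> (\<exists>B. finite B \<and> card B < k \<and> range X \<subseteq> module.span sc B)"

text \<open>k-th singular value (k \<ge> 1).\<close>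
definition sval :: "(complex \<Rightarrow> 'a::ab_group_add \<Rightarrow> 'a) \<Rightarrow> ('a \<Rightarrow> 'a \<Rightarrow> complex) \<Rightarrow> nat \<Rightarrow> ('a \<Rightarrow> 'a) \<Rightarrow> real" where
  "sval sc ip k A = Inf {opnorm ip (\<lambda>v. A v - X v) | X. bop sc ip X \<and> rank_lt sc X k}"

definition cnorm :: "(complex \<Rightarrow> 'a::ab_group_add \<Rightarrow> 'a) \<Rightarrow> ('a \<Rightarrow> 'a \<Rightarrow> complex) \<Rightarrow> (nat \<Rightarrow> real) \<Rightarrow> nat \<Rightarrow> ('a \<Rightarrow> 'a) \<Rightarrow> real" where
  "cnorm sc ip c n A = (\<Sum>j=1..n. c j * sval sc ip j A)"

definition outer :: "(complex \<Rightarrow> 'a \<Rightarrow> 'a) \<Rightarrow> ('a \<Rightarrow> 'a \<Rightarrow> complex) \<Rightarrow> 'a \<Rightarrow> 'a \<Rightarrow> 'a \<Rightarrow> 'a" where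
  "outer sc ip x y = (\<lambda>v. sc (ip v y) x)"

definition desc_pos :: "(nat \<Rightarrow> real) \<Rightarrow> nat \<Rightarrow> bool" where
  "desc_pos c n \<longleftrightarrow> (\<forall>i j. 1 \<le> i \<longrightarrow> i \<le> j \<longrightarrow> j \<le> n \<longrightarrow> c j \<le> c i) \<and> 0 < c n"

end

theory Submission
  imports Defs
begin


locale hs =
  fixes sc :: "complex \<Rightarrow> 'a::ab_group_add \<Rightarrow> 'a" and ip :: "'a \<Rightarrow> 'a \<Rightarrow> complex"
  assumes H: "chilbert sc ip"
begin

lemmas ax = H[unfolded chilbert_def]
lemma vsp: "vector_space sc" using ax by (rule conjunct1)
lemma md: "module sc" using vsp by (simp add: module_iff_vector_space)
lemma sc_right_distrib: "sc a (x + y) = sc a x + sc a y" using md by (rule module.scale_right_distrib)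
lemma sc_left_distrib: "sc (a + b) x = sc a x + sc b x" using md by (rule module.scale_left_distrib)
lemma sc_sc[simp]: "sc a (sc b x) = sc (a * b) x" using md by (rule module.scale_scale)
lemma sc_one[simp]: "sc 1 x = x" using md by (rule module.scale_one)
lemma sc_zero_left[simp]: "sc 0 x = 0" using md by (rule module.scale_zero_left)
lemma sc_zero_right[simp]: "sc a 0 = 0" using md by (rule module.scale_zero_right)
lemma sc_minus_left[simp]: "sc (- a) x = - sc a x" using md by (rule module.scale_minus_left)
lemma sc_minus_right[simp]: "sc a (- x) = - sc a x" using md by (rule module.scale_minus_right)
lemma sc_right_diff: "sc a (x - y) = sc a x - sc a y" using md by (rule module.scale_right_diff_distrib)
lemma sc_left_diff: "sc (a - b) x = sc a x - sc b x" using md by (rule module.scale_left_diff_distrib)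
lemma sc_eq_0_iff[simp]: "sc a x = 0 \<longleftrightarrow> a = 0 \<or> x = 0" using vsp by (rule vector_space.scale_eq_0_iff)

lemma ip_sym: "ip y x = cnj (ip x y)" using ax[THEN conjunct2, THEN conjunct1] by blast
lemma ip_add_left[simp]: "ip (x + y) z = ip x z + ip y z" using ax[THEN conjunct2, THEN conjunct2, THEN conjunct1] by blast
lemma ip_scale_left[simp]: "ip (sc a x) y = a * ip x y" using ax[THEN conjunct2, THEN conjunct2, THEN conjunct2, THEN conjunct1] by blast
lemma ip_pos: "0 \<le> Re (ip x x)" using ax[THEN conjunct2, THEN conjunct2, THEN conjunct2, THEN conjunct2, THEN conjunct1] by blast
lemma ip_def0: "ip x x = 0 \<Longrightarrow> x = 0" using ax[THEN conjunct2, THEN conjunct2, THEN conjunct2, THEN conjunct2, THEN conjunct2, THEN conjunct1] by blast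
lemma complete: "(\<forall>e>0. \<exists>N. \<forall>m\<ge>N. \<forall>k\<ge>N. hnorm ip (f m - f k) < e) \<Longrightarrow>
        (\<exists>l. (\<lambda>m. hnorm ip (f m - l)) \<longlonglongrightarrow> 0)" using ax[THEN conjunct2, THEN conjunct2, THEN conjunct2, THEN conjunct2, THEN conjunct2, THEN conjunct2] by blast

lemma ip_add_right[simp]: "ip z (x + y) = ip z x + ip z y"
  by (metis ip_sym ip_add_left complex_cnj_add)
lemma ip_scale_right[simp]: "ip x (sc a y) = cnj a * ip x y"
  by (metis ip_sym ip_scale_left complex_cnj_mult)
lemma ip_zero_left[simp]: "ip 0 y = 0"
  using ip_add_left[of 0 0 y] by simp
lemma ip_zero_right[simp]: "ip y 0 = 0"
  using ip_add_right[of y 0 0] by simp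
lemma ip_minus_left[simp]: "ip (- x) y = - ip x y"
proof -
  have "ip x y + ip (-x) y = ip (x + -x) y" by (rule ip_add_left[symmetric])
  also have "\<dots> = 0" by simp
  finally have "ip x y + ip (-x) y = 0" .
  then show ?thesis by (simp add: add_eq_0_iff)
qed
lemma ip_minus_right[simp]: "ip y (- x) = - ip y x"
proof -
  have "ip y x + ip y (-x) = ip y (x + -x)" by (rule ip_add_right[symmetric])
  also have "\<dots> = 0" by simp
  finally have "ip y x + ip y (-x) = 0" .
  then show ?thesis by (simp add: add_eq_0_iff)
qed
lemma ip_diff_left[simp]: "ip (x - z) y = ip x y - ip z y"
  by (simp only: diff_conv_add_uminus ip_add_left ip_minus_left)
lemma ip_diff_right[simp]: "ip y (x - z) = ip y x - ip y z"
  by (simp only: diff_conv_add_uminus ip_add_right ip_minus_right)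

abbreviation nm where "nm \<equiv> hnorm ip"


lemma cx: fixes p :: complex and X N :: real assumes "N \<noteq> 0"
  shows "of_real X - cnj (p / of_real N) * p - (p / of_real N) * cnj p + (p / of_real N) * cnj (p / of_real N) * of_real N
   = of_real (X - (cmod p)^2 / N)"
proof -
  have "cnj (p / of_real N) = cnj p / of_real N" by simp
  moreover have pp: "p * cnj p = of_real ((cmod p)^2)" by (metis complex_norm_square)
  moreover have "cnj p * p = of_real ((cmod p)^2)" using pp by (simp add: mult.commute)
  ultimately have "of_real X - cnj (p / of_real N) * p - (p / of_real N) * cnj p + (p / of_real N) * cnj (p / of_real N) * of_real N
    = of_real X - of_real ((cmod p)^2) / of_real N" using assms
    by (simp add: field_simps)
  then show ?thesis by simp
qed

lemma nm_nonneg[simp]: "0 \<le> nm x" unfolding hnorm_def by (simp add: ip_pos)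
lemma nm_sq: "(nm x)\<^sup>2 = Re (ip x x)" unfolding hnorm_def using ip_pos by simp
lemma ip_self_real: "ip x x = of_real (Re (ip x x))"
  using ip_sym[of x x] by (simp add: complex_eq_iff)
lemma ip_self: "ip x x = of_real ((nm x)\<^sup>2)"
  using ip_self_real nm_sq by simp
lemma nm_zero[simp]: "nm 0 = 0" unfolding hnorm_def by simp
lemma nm_eq_0[simp]: "nm x = 0 \<longleftrightarrow> x = 0"
proof
  assume "nm x = 0" then have "ip x x = 0" using ip_self[of x] by simp
  then show "x = 0" by (rule ip_def0)
qed simp
lemma nm_pos: "x \<noteq> 0 \<Longrightarrow> 0 < nm x"
  using nm_nonneg[of x] nm_eq_0[of x] by linarith

lemma nm_scale[simp]: "nm (sc a x) = cmod a * nm x"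
proof -
  have aa: "a * cnj a = of_real ((cmod a)^2)" by (metis complex_norm_square)
  have "ip (sc a x) (sc a x) = a * cnj a * ip x x" by (simp add: mult.assoc)
  also have "\<dots> = of_real ((cmod a)^2) * of_real ((nm x)^2)" by (metis aa ip_self)
  also have "\<dots> = of_real ((cmod a * nm x)^2)" by (simp add: power_mult_distrib)
  finally have "complex_of_real ((nm (sc a x))^2) = of_real ((cmod a * nm x)^2)" by (metis ip_self)
  then have "(nm (sc a x))^2 = (cmod a * nm x)^2" using of_real_eq_iff by blast
  then show ?thesis by (simp add: power2_eq_iff_nonneg)
qed

lemma nm_minus[simp]: "nm (- x) = nm x"
  unfolding hnorm_def by simp
lemma nm_commute: "nm (x - y) = nm (y - x)"
  by (metis minus_diff_eq nm_minus)

lemma proj_identity: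
  assumes "y \<noteq> 0"
  shows "ip (x - sc (ip x y / ip y y) y) (x - sc (ip x y / ip y y) y)
     = of_real ((nm x)\<^sup>2 - (cmod (ip x y))\<^sup>2 / (nm y)\<^sup>2)"
proof -
  have ny: "(nm y)\<^sup>2 \<noteq> 0" using assms by simp
  define t where "t = ip x y / ip y y"
  have e: "ip (x - sc t y) (x - sc t y) = ip x x - cnj t * ip x y - t * ip y x + t * cnj t * ip y y"
    by (simp add: algebra_simps)
  have t: "t = ip x y / of_real ((nm y)\<^sup>2)" unfolding t_def by (simp add: ip_self[of y])
  show ?thesis unfolding t_def[symmetric] e
    unfolding t ip_self[of y] ip_self[of x] ip_sym[of y x]
    by (rule cx[OF ny])
qed



lemma cs: "cmod (ip x y) \<le> nm x * nm y"
proof (cases "y = 0")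
  case True thus ?thesis by simp
next
  case False
  define r where "r = x - sc (ip x y / ip y y) y"
  have "ip r r = of_real ((nm x)\<^sup>2 - (cmod (ip x y))\<^sup>2 / (nm y)\<^sup>2)"
    unfolding r_def by (rule proj_identity[OF False])
  then have "Re (ip r r) = (nm x)\<^sup>2 - (cmod (ip x y))\<^sup>2 / (nm y)\<^sup>2" by (metis Re_complex_of_real)
  then have "0 \<le> (nm x)\<^sup>2 - (cmod (ip x y))\<^sup>2/(nm y)\<^sup>2" using ip_pos[of r] by linarith
  moreover have p: "0 < (nm y)\<^sup>2" using False by simp
  ultimately have "(cmod (ip x y))\<^sup>2 \<le> (nm x * nm y)\<^sup>2"
    using pos_divide_le_eq[OF p] by (simp add: power_mult_distrib)
  then show ?thesis by (rule power2_le_imp_le) simp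
qed

lemma cs_eq: assumes "y \<noteq> 0" "cmod (ip x y) = nm x * nm y"
  shows "x = sc (ip x y / ip y y) y"
proof -
  define r where "r = x - sc (ip x y / ip y y) y"
  have "ip r r = of_real ((nm x)\<^sup>2 - (cmod (ip x y))\<^sup>2 / (nm y)\<^sup>2)"
    unfolding r_def by (rule proj_identity[OF assms(1)])
  also have "(nm x)\<^sup>2 - (cmod (ip x y))\<^sup>2 / (nm y)\<^sup>2 = 0"
    using assms nm_pos[OF assms(1)] by (simp add: power_mult_distrib)
  finally have "ip r r = 0" by simp
  then have "r = 0" by (rule ip_def0)
  then show ?thesis unfolding r_def by simp
qed

lemma re_ip_sym: "Re (ip y x) = Re (ip x y)"
  by (subst ip_sym) simp

lemma nm_add_sq: "(nm (x+y))\<^sup>2 = (nm x)\<^sup>2 + 2 * Re (ip x y) + (nm y)\<^sup>2"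
  unfolding nm_sq by (simp add: re_ip_sym[of y x])

lemma nm_diff_sq: "(nm (x-y))\<^sup>2 = (nm x)\<^sup>2 - 2 * Re (ip x y) + (nm y)\<^sup>2"
  unfolding nm_sq by (simp add: re_ip_sym[of y x])

lemma triangle: "nm (x+y) \<le> nm x + nm y"
proof -
  have "Re (ip x y) \<le> nm x * nm y" using cs[of x y] complex_Re_le_cmod[of "ip x y"] by linarith
  then have "(nm (x+y))\<^sup>2 \<le> (nm x + nm y)\<^sup>2" unfolding nm_add_sq by (simp add: power2_sum)
  then show ?thesis by (rule power2_le_imp_le) simp
qed

lemma triangle_diff: "nm (x-y) \<le> nm x + nm y"
  using triangle[of x "-y"] by simp

lemma pythag: "ip x y = 0 \<Longrightarrow> (nm (x+y))\<^sup>2 = (nm x)\<^sup>2 + (nm y)\<^sup>2"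
  unfolding nm_add_sq by simp

lemma parallelogram: "(nm (x+y))\<^sup>2 + (nm (x-y))\<^sup>2 = 2*(nm x)\<^sup>2 + 2*(nm y)\<^sup>2"
  unfolding nm_add_sq nm_diff_sq by simp

lemma minus_is_scale: "- x = sc (-1) x"
  by simp

section \<open>Operators\<close>

lemma bop_add: "bop sc ip T \<Longrightarrow> T (x + y) = T x + T y" unfolding bop_def by blast
lemma bop_scale: "bop sc ip T \<Longrightarrow> T (sc a x) = sc a (T x)" unfolding bop_def by blast
lemma bop_0: "bop sc ip T \<Longrightarrow> T 0 = 0"
  using bop_scale[of T 0 0] by simp
lemma bop_minus: "bop sc ip T \<Longrightarrow> T (- x) = - T x"
  using bop_scale[of T "-1" x] by simp
lemma bop_diff: assumes "bop sc ip T" shows "T (x - y) = T x - T y"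
  using bop_add[OF assms, of x "-y"] bop_minus[OF assms, of y] by (simp only: diff_conv_add_uminus)

lemma bop_bound: assumes "bop sc ip T" obtains K where "K \<ge> 0" "\<And>x. nm (T x) \<le> K * nm x"
proof -
  obtain K where K: "\<And>x. nm (T x) \<le> K * nm x" using assms unfolding bop_def by blast
  have "nm (T x) \<le> max K 0 * nm x" for x
    using K[of x] by (metis max.cobounded1 mult_right_mono nm_nonneg order_trans)
  then show ?thesis using that[of "max K 0"] by simp
qed

lemma opnorm_bdd: assumes "bop sc ip T" shows "bdd_above {nm (T x) | x. nm x \<le> 1}"
proof -
  obtain K where K: "K \<ge> 0" "\<And>x. nm (T x) \<le> K * nm x" using bop_bound[OF assms] by blast
  have "nm (T x) \<le> K" if "nm x \<le> 1" for x
    using K(2)[of x] mult_left_mono[OF that K(1)] by simp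
  then show ?thesis unfolding bdd_above_def by blast
qed

lemma opnorm_ge: "bop sc ip T \<Longrightarrow> nm x \<le> 1 \<Longrightarrow> nm (T x) \<le> opnorm ip T"
  unfolding opnorm_def by (rule cSup_upper) (auto intro: opnorm_bdd)

lemma opnorm_nonneg: "bop sc ip T \<Longrightarrow> 0 \<le> opnorm ip T"
  using opnorm_ge[of T 0] by (simp add: bop_0)

lemma opnorm_bound: assumes "bop sc ip T" shows "nm (T x) \<le> opnorm ip T * nm x"
proof (cases "x = 0")
  case True thus ?thesis by (simp add: bop_0 assms)
next
  case False
  let ?x = "sc (of_real (1 / nm x)) x"
  have n: "nm ?x = 1" using False by (simp add: norm_divide)
  have "nm (T ?x) \<le> opnorm ip T" using opnorm_ge[OF assms] n by simp
  then have "nm (T x) / nm x \<le> opnorm ip T" using False nm_pos[OF False] by (simp add: bop_scale[OF assms] norm_divide)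
  then show ?thesis using nm_pos[OF False] by (simp add: field_simps)
qed

lemma opnorm_le: assumes "0 \<le> M" "\<And>x. nm (T x) \<le> M * nm x" shows "opnorm ip T \<le> M"
  unfolding opnorm_def
proof (rule cSup_least)
  show "{nm (T x) |x. nm x \<le> 1} \<noteq> {}" by (auto intro: exI[of _ 0])
  fix r assume "r \<in> {nm (T x) |x. nm x \<le> 1}"
  then obtain x where "r = nm (T x)" "nm x \<le> 1" by blast
  then show "r \<le> M" using assms(2)[of x] mult_left_mono[of "nm x" 1 M] assms(1) by simp
qed

lemma bop_zero_op: "bop sc ip (\<lambda>_. 0)"
  unfolding bop_def by (auto intro: exI[of _ 0])

lemma opnorm_zero_op[simp]: "opnorm ip (\<lambda>_. 0) = 0"
  using opnorm_le[of 0 "\<lambda>_. 0"] opnorm_nonneg[OF bop_zero_op] by simp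

lemma bop_comp: assumes "bop sc ip A" "bop sc ip B" shows "bop sc ip (A \<circ> B)"
  unfolding bop_def
proof (intro conjI allI exI)
  fix x y show "(A \<circ> B) (x + y) = (A \<circ> B) x + (A \<circ> B) y" by (simp add: bop_add assms)
next
  fix a x show "(A \<circ> B) (sc a x) = sc a ((A \<circ> B) x)" by (simp add: bop_scale assms)
next
  fix x show "nm ((A \<circ> B) x) \<le> (opnorm ip A * opnorm ip B) * nm x"
    using opnorm_bound[OF assms(1), of "B x"] opnorm_bound[OF assms(2), of x]
      mult_left_mono[OF _ opnorm_nonneg[OF assms(1)], of "nm (B x)" "opnorm ip B * nm x"]
    by (simp add: mult.assoc)
qed

lemma opnorm_comp: assumes "bop sc ip A" "bop sc ip B" shows "opnorm ip (A \<circ> B) \<le> opnorm ip A * opnorm ip B"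
proof (rule opnorm_le)
  show "0 \<le> opnorm ip A * opnorm ip B" using opnorm_nonneg assms by simp
  fix x show "nm ((A \<circ> B) x) \<le> (opnorm ip A * opnorm ip B) * nm x"
    using opnorm_bound[OF assms(1), of "B x"] opnorm_bound[OF assms(2), of x]
      mult_left_mono[OF _ opnorm_nonneg[OF assms(1)], of "nm (B x)" "opnorm ip B * nm x"]
    by (simp add: mult.assoc)
qed

lemma bop_diff_op: assumes "bop sc ip A" "bop sc ip X" shows "bop sc ip (\<lambda>v. A v - X v)"
  unfolding bop_def
proof (intro conjI allI exI)
  fix x y show "A (x + y) - X (x + y) = A x - X x + (A y - X y)" by (simp add: bop_add assms)
next
  fix a x show "A (sc a x) - X (sc a x) = sc a (A x - X x)"
    by (simp add: bop_scale assms sc_right_diff)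
next
  fix x show "nm (A x - X x) \<le> (opnorm ip A + opnorm ip X) * nm x"
    using triangle_diff[of "A x" "X x"] opnorm_bound[OF assms(1), of x] opnorm_bound[OF assms(2), of x]
    by (simp add: distrib_right)
qed

lemma opnorm_eq_0: assumes "bop sc ip T" "opnorm ip T = 0" shows "T = (\<lambda>_. 0)"
proof
  fix x show "T x = 0" using opnorm_bound[OF assms(1), of x] assms(2) nm_nonneg[of "T x"] by simp
qed

lemma opnorm_pos: "bop sc ip T \<Longrightarrow> T \<noteq> (\<lambda>_. 0) \<Longrightarrow> 0 < opnorm ip T"
  using opnorm_eq_0 opnorm_nonneg by force

end



context hs begin

section \<open>Rank\<close>

lemma rank_lt_mono: "rank_lt sc X k \<Longrightarrow> k \<le> k' \<Longrightarrow> rank_lt sc X k'"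
  unfolding rank_lt_def by (meson less_le_trans)

lemma rank_lt_pos: "rank_lt sc X k \<Longrightarrow> 1 \<le> k"
  unfolding rank_lt_def by auto

lemma rank_lt_zero: "1 \<le> k \<Longrightarrow> rank_lt sc (\<lambda>_. 0) k"
  unfolding rank_lt_def by (intro exI[of _ "{}"]) (auto simp: module.span_zero[OF md])

lemma rank_lt_1: assumes "rank_lt sc X 1" shows "X = (\<lambda>_. 0)"
proof -
  obtain S where S: "finite S" "card S < 1" "range X \<subseteq> module.span sc S"
    using assms unfolding rank_lt_def by blast
  then have "S = {}" by auto
  then have "range X \<subseteq> {0}" using S(3) module.span_empty[OF md] by simp
  then show ?thesis by auto
qed

lemma rank_lt_comp_right: assumes "rank_lt sc X k" shows "rank_lt sc (X \<circ> B) k"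
proof -
  obtain S where S: "finite S" "card S < k" "range X \<subseteq> module.span sc S"
    using assms unfolding rank_lt_def by blast
  have "range (X \<circ> B) \<subseteq> range X" by auto
  then show ?thesis unfolding rank_lt_def using S by blast
qed

lemma bop_hom: "bop sc ip A \<Longrightarrow> module_hom sc sc A"
  unfolding module_hom_def module_hom_axioms_def using md by (auto simp: bop_add bop_scale)

lemma rank_lt_comp_left: assumes "bop sc ip A" "rank_lt sc X k" shows "rank_lt sc (A \<circ> X) k"
proof -
  obtain S where S: "finite S" "card S < k" "range X \<subseteq> module.span sc S"
    using assms unfolding rank_lt_def by blast
  have "A ` range X \<subseteq> module.span sc (A ` S)"
    using module_hom.spans_image[OF bop_hom[OF assms(1)] S(3)] .
  moreover have "range (A \<circ> X) = A ` range X" by auto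
  moreover have "card (A ` S) < k" using card_image_le[OF S(1), of A] S(2) by linarith
  ultimately show ?thesis unfolding rank_lt_def using S(1) by (metis finite_imageI)
qed

lemma outer_apply: "outer sc ip x y v = sc (ip v y) x" by (simp add: outer_def)

lemma rank_lt_outer: "rank_lt sc (outer sc ip x y) 2"
  unfolding rank_lt_def
proof (intro exI conjI)
  show "finite {x}" by simp
  show "card {x} < 2" by simp
  show "range (outer sc ip x y) \<subseteq> module.span sc {x}"
    using module.span_singleton[OF md, of x] by (auto simp: outer_def)
qed

section \<open>Singular values\<close>

lemma sval_bdd: "bop sc ip A \<Longrightarrow> bdd_below {opnorm ip (\<lambda>v. A v - X v) | X. bop sc ip X \<and> rank_lt sc X k}"
  unfolding bdd_below_def by (auto intro!: exI[of _ 0] opnorm_nonneg bop_diff_op)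

lemma sval_le: "bop sc ip A \<Longrightarrow> bop sc ip X \<Longrightarrow> rank_lt sc X k \<Longrightarrow> sval sc ip k A \<le> opnorm ip (\<lambda>v. A v - X v)"
  unfolding sval_def by (rule cInf_lower) (auto intro: sval_bdd)

lemma sval_ge: assumes "1 \<le> k" "\<And>X. bop sc ip X \<Longrightarrow> rank_lt sc X k \<Longrightarrow> m \<le> opnorm ip (\<lambda>v. A v - X v)"
  shows "m \<le> sval sc ip k A"
  unfolding sval_def
proof (rule cInf_greatest)
  show "{opnorm ip (\<lambda>v. A v - X v) |X. bop sc ip X \<and> rank_lt sc X k} \<noteq> {}"
    using bop_zero_op rank_lt_zero[OF assms(1)] by blast
qed (use assms(2) in blast)

lemma sval_nonneg: "bop sc ip A \<Longrightarrow> 1 \<le> k \<Longrightarrow> 0 \<le> sval sc ip k A"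
  by (rule sval_ge) (auto intro: opnorm_nonneg bop_diff_op)

lemma sval_1: assumes "bop sc ip A" shows "sval sc ip 1 A = opnorm ip A"
proof (rule antisym)
  show "sval sc ip 1 A \<le> opnorm ip A"
    using sval_le[OF assms bop_zero_op rank_lt_zero[of 1]] by simp
  show "opnorm ip A \<le> sval sc ip 1 A"
  proof (rule sval_ge)
    fix X assume "bop sc ip X" "rank_lt sc X 1"
    then have "X = (\<lambda>_. 0)" using rank_lt_1 by blast
    then show "opnorm ip A \<le> opnorm ip (\<lambda>v. A v - X v)" by simp
  qed simp
qed

lemma sval_rank: assumes "bop sc ip A" "rank_lt sc A k" shows "sval sc ip k A = 0"
proof (rule antisym)
  show "sval sc ip k A \<le> 0" using sval_le[OF assms(1) assms] by simp
  show "0 \<le> sval sc ip k A" using sval_nonneg[OF assms(1) rank_lt_pos[OF assms(2)]] .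
qed

lemma sval_comp_left: assumes A: "bop sc ip A" and B: "bop sc ip B" and k: "1 \<le> k"
  shows "sval sc ip k (A \<circ> B) \<le> opnorm ip A * sval sc ip k B"
proof (cases "opnorm ip A = 0")
  case True
  then have "A = (\<lambda>_. 0)" using opnorm_eq_0[OF A] by simp
  then have "A \<circ> B = (\<lambda>_. 0)" by auto
  then show ?thesis using True sval_rank[OF bop_zero_op rank_lt_zero[OF k]] by simp
next
  case False
  then have pos: "0 < opnorm ip A" using opnorm_nonneg[OF A] by simp
  have "sval sc ip k (A \<circ> B) / opnorm ip A \<le> sval sc ip k B"
  proof (rule sval_ge[OF k])
    fix X assume X: "bop sc ip X" "rank_lt sc X k"
    have eq: "(\<lambda>v. (A \<circ> B) v - (A \<circ> X) v) = A \<circ> (\<lambda>v. B v - X v)"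
      by (auto simp: bop_diff[OF A])
    have "sval sc ip k (A \<circ> B) \<le> opnorm ip (\<lambda>v. (A \<circ> B) v - (A \<circ> X) v)"
      by (rule sval_le[OF bop_comp[OF A B] bop_comp[OF A X(1)] rank_lt_comp_left[OF A X(2)]])
    also have "\<dots> \<le> opnorm ip A * opnorm ip (\<lambda>v. B v - X v)"
      unfolding eq by (rule opnorm_comp[OF A bop_diff_op[OF B X(1)]])
    finally show "sval sc ip k (A \<circ> B) / opnorm ip A \<le> opnorm ip (\<lambda>v. B v - X v)"
      using pos by (simp add: pos_divide_le_eq mult.commute)
  qed
  then show ?thesis using pos by (simp add: pos_divide_le_eq mult.commute)
qed

lemma sval_comp_right: assumes A: "bop sc ip A" and B: "bop sc ip B" and k: "1 \<le> k"
  shows "sval sc ip k (A \<circ> B) \<le> sval sc ip k A * opnorm ip B"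
proof (cases "opnorm ip B = 0")
  case True
  then have "B = (\<lambda>_. 0)" using opnorm_eq_0[OF B] by simp
  then have "A \<circ> B = (\<lambda>_. 0)" by (auto simp: bop_0[OF A])
  then show ?thesis using True sval_rank[OF bop_zero_op rank_lt_zero[OF k]] by simp
next
  case False
  then have pos: "0 < opnorm ip B" using opnorm_nonneg[OF B] by simp
  have "sval sc ip k (A \<circ> B) / opnorm ip B \<le> sval sc ip k A"
  proof (rule sval_ge[OF k])
    fix X assume X: "bop sc ip X" "rank_lt sc X k"
    have eq: "(\<lambda>v. (A \<circ> B) v - (X \<circ> B) v) = (\<lambda>v. A v - X v) \<circ> B"
      by auto
    have "sval sc ip k (A \<circ> B) \<le> opnorm ip (\<lambda>v. (A \<circ> B) v - (X \<circ> B) v)"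
      by (rule sval_le[OF bop_comp[OF A B] bop_comp[OF X(1) B] rank_lt_comp_right[OF X(2)]])
    also have "\<dots> \<le> opnorm ip (\<lambda>v. A v - X v) * opnorm ip B"
      unfolding eq by (rule opnorm_comp[OF bop_diff_op[OF A X(1)] B])
    finally show "sval sc ip k (A \<circ> B) / opnorm ip B \<le> opnorm ip (\<lambda>v. A v - X v)"
      using pos by (simp add: pos_divide_le_eq)
  qed
  then show ?thesis using pos by (simp add: pos_divide_le_eq)
qed

section \<open>The c-norm\<close>

lemma c_pos: "desc_pos c n \<Longrightarrow> 1 \<le> j \<Longrightarrow> j \<le> n \<Longrightarrow> 0 < c j"
  unfolding desc_pos_def by (meson less_le_trans order_refl)

lemma cnorm_split: "1 \<le> n \<Longrightarrow> cnorm sc ip c n A = c 1 * sval sc ip 1 A + (\<Sum>j=2..n. c j * sval sc ip j A)"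
  unfolding cnorm_def by (simp add: sum.atLeast_Suc_atMost numeral_2_eq_2)

lemma rest_nonneg: "desc_pos c n \<Longrightarrow> bop sc ip A \<Longrightarrow> 0 \<le> (\<Sum>j=2..n. c j * sval sc ip j A)"
  by (rule sum_nonneg) (auto intro!: mult_nonneg_nonneg sval_nonneg less_imp_le[OF c_pos])

lemma cnorm_ge: "desc_pos c n \<Longrightarrow> 1 \<le> n \<Longrightarrow> bop sc ip A \<Longrightarrow> c 1 * opnorm ip A \<le> cnorm sc ip c n A"
  using cnorm_split[of n c A] rest_nonneg[of c n A] sval_1[of A] by simp

lemma cnorm_nonneg: "desc_pos c n \<Longrightarrow> 1 \<le> n \<Longrightarrow> bop sc ip A \<Longrightarrow> 0 \<le> cnorm sc ip c n A"
  using cnorm_ge[of c n A] c_pos[of c n 1] opnorm_nonneg[of A]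
  by (meson less_imp_le mult_nonneg_nonneg order_trans order_refl)

lemma cnorm_comp_left: assumes "desc_pos c n" "bop sc ip A" "bop sc ip B"
  shows "cnorm sc ip c n (A \<circ> B) \<le> opnorm ip A * cnorm sc ip c n B"
  unfolding cnorm_def sum_distrib_left
proof (rule sum_mono)
  fix j assume j: "j \<in> {1..n}"
  have "c j * sval sc ip j (A \<circ> B) \<le> c j * (opnorm ip A * sval sc ip j B)"
    using j c_pos[OF assms(1), of j] sval_comp_left[OF assms(2,3), of j] by (auto intro: mult_left_mono)
  then show "c j * sval sc ip j (A \<circ> B) \<le> opnorm ip A * (c j * sval sc ip j B)" by (simp add: mult_ac)
qed

lemma cnorm_comp_right: assumes "desc_pos c n" "bop sc ip A" "bop sc ip B"
  shows "cnorm sc ip c n (A \<circ> B) \<le> cnorm sc ip c n A * opnorm ip B"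
  unfolding cnorm_def sum_distrib_right
proof (rule sum_mono)
  fix j assume j: "j \<in> {1..n}"
  have "c j * sval sc ip j (A \<circ> B) \<le> c j * (sval sc ip j A * opnorm ip B)"
    using j c_pos[OF assms(1), of j] sval_comp_right[OF assms(2,3), of j] by (auto intro: mult_left_mono)
  then show "c j * sval sc ip j (A \<circ> B) \<le> c j * sval sc ip j A * opnorm ip B" by (simp add: mult_ac)
qed

lemma cnorm_rank1: assumes "1 \<le> n" "bop sc ip A" "rank_lt sc A 2"
  shows "cnorm sc ip c n A = c 1 * opnorm ip A"
proof -
  have "(\<Sum>j=2..n. c j * sval sc ip j A) = 0"
    using sval_rank[OF assms(2) rank_lt_mono[OF assms(3)]] by (auto intro!: sum.neutral)
  then show ?thesis using cnorm_split[OF assms(1), of c A] sval_1[OF assms(2)] by simp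
qed

section \<open>Outer products\<close>

lemma bop_outer: "bop sc ip (outer sc ip x y)"
  unfolding bop_def outer_def
proof (intro conjI allI exI)
  fix a b show "sc (ip (a + b) y) x = sc (ip a y) x + sc (ip b y) x" by (simp add: sc_left_distrib)
next
  fix a v show "sc (ip (sc a v) y) x = sc a (sc (ip v y) x)" by simp
next
  fix v show "nm (sc (ip v y) x) \<le> (nm x * nm y) * nm v"
    using cs[of v y] mult_right_mono[OF cs[of v y] nm_nonneg[of x]] by (simp add: mult_ac)
qed

lemma opnorm_outer: "opnorm ip (outer sc ip x y) = nm x * nm y"
proof (rule antisym)
  show "opnorm ip (outer sc ip x y) \<le> nm x * nm y"
  proof (rule opnorm_le)
    show "0 \<le> nm x * nm y" by simp
    fix v show "nm (outer sc ip x y v) \<le> nm x * nm y * nm v"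
      using mult_right_mono[OF cs[of v y] nm_nonneg[of x]] by (simp add: outer_def mult_ac)
  qed
next
  show "nm x * nm y \<le> opnorm ip (outer sc ip x y)"
  proof (cases "y = 0")
    case True then show ?thesis using opnorm_nonneg[OF bop_outer] by simp
  next
    case False
    let ?v = "sc (of_real (1 / nm y)) y"
    have n: "nm ?v = 1" using False by (simp add: norm_divide)
    have "ip ?v y = of_real (nm y)" using False by (simp add: ip_self power2_eq_square)
    then have "nm (outer sc ip x y ?v) = nm x * nm y" by (simp add: outer_def)
    then show ?thesis using opnorm_ge[OF bop_outer, of ?v x y] n by simp
  qed
qed

lemma outer_comp: "outer sc ip x y \<circ> outer sc ip w z = outer sc ip (sc (ip w y) x) z"
  by (rule ext) (simp add: outer_def)

lemma outer_zero_iff: "outer sc ip x y = (\<lambda>_. 0) \<longleftrightarrow> x = 0 \<or> y = 0"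
proof
  assume "outer sc ip x y = (\<lambda>_. 0)"
  then have "sc (ip y y) x = 0" unfolding outer_def by meson
  then show "x = 0 \<or> y = 0" using ip_def0 by auto
qed (auto simp: outer_def)

lemma outer_scale: "outer sc ip (sc t y) z = outer sc ip y (sc (cnj t) z)"
  by (rule ext) (simp add: outer_def mult.commute)

lemma exists_unit: assumes "\<exists>B. finite B \<and> card B = n \<and> \<not> module.dependent sc B" "1 \<le> n"
  shows "\<exists>e. nm e = 1"
proof -
  obtain B where B: "finite B" "card B = n" "\<not> module.dependent sc B" using assms(1) by blast
  then have "B \<noteq> {}" using assms(2) by auto
  then obtain b where b: "b \<in> B" by blast
  have "b \<noteq> 0" using B(3) b module.dependent_zero[OF md, of B] by auto
  then have "nm (sc (of_real (1 / nm b)) b) = 1" by (simp add: norm_divide)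
  then show ?thesis by blast
qed

lemma unit_facts: assumes e: "nm e = 1"
  shows "outer sc ip e e \<circ> outer sc ip e e = outer sc ip e e"
    "opnorm ip (outer sc ip e e) = 1" "outer sc ip e e \<noteq> (\<lambda>_. 0)"
proof -
  have "ip e e = 1" using e by (simp add: ip_self)
  then show "outer sc ip e e \<circ> outer sc ip e e = outer sc ip e e" by (simp add: outer_comp)
  show "opnorm ip (outer sc ip e e) = 1" using e by (simp add: opnorm_outer)
  have "e \<noteq> 0" using e by auto
  then show "outer sc ip e e \<noteq> (\<lambda>_. 0)" by (simp add: outer_zero_iff)
qed

end



context hs begin

lemma riesz:
  assumes add: "\<And>x y. f (x + y) = f x + f y" and scl: "\<And>a x. f (sc a x) = a * f x"
    and bnd: "\<And>x. cmod (f x) \<le> K * nm x"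
  shows "\<exists>y. \<forall>v. f v = ip v y"
proof (cases "\<forall>v. f v = 0")
  case True then show ?thesis by (intro exI[of _ 0]) simp
next
  case False
  then obtain u0 where u0: "f u0 \<noteq> 0" by blast
  have f0: "f 0 = 0" using scl[of 0 0] by simp
  have fdiff: "f (x - y) = f x - f y" for x y
  proof -
    have "f (x - y) + f y = f x" using add[of "x - y" y] by simp
    then show ?thesis by (simp add: eq_diff_eq)
  qed
  define M where "M = {v. f v = 1}"
  define d2 where "d2 = Inf ((\<lambda>v. (nm v)\<^sup>2) ` M)"
  have u1: "sc (1 / f u0) u0 \<in> M" using u0 by (simp add: M_def scl)
  have bdd: "bdd_below ((\<lambda>v. (nm v)\<^sup>2) ` M)" by (rule bdd_belowI[of _ 0]) auto
  have lower: "d2 \<le> (nm v)\<^sup>2" if "v \<in> M" for v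
    unfolding d2_def by (rule cInf_lower) (use bdd that in auto)
  have d2nn: "0 \<le> d2" unfolding d2_def by (rule cInf_greatest) (use u1 in auto)
  have approx: "\<exists>v. v \<in> M \<and> (nm v)\<^sup>2 < d2 + 1 / real (Suc k)" for k
  proof -
    have "Inf ((\<lambda>v. (nm v)\<^sup>2) ` M) < d2 + 1 / real (Suc k)" unfolding d2_def by simp
    then have "\<exists>x\<in>(\<lambda>v. (nm v)\<^sup>2) ` M. x < d2 + 1 / real (Suc k)"
      using cInf_less_iff[OF _ bdd] u1 by blast
    then show ?thesis by blast
  qed
  then have "\<forall>k. \<exists>v. v \<in> M \<and> (nm v)\<^sup>2 < d2 + 1 / real (Suc k)" by blast
  then obtain vs where vs: "\<And>k. vs k \<in> M" "\<And>k. (nm (vs k))\<^sup>2 < d2 + 1 / real (Suc k)"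
    using choice[of "\<lambda>k v. v \<in> M \<and> (nm v)\<^sup>2 < d2 + 1 / real (Suc k)"] by blast
  have par: "(nm (vs m - vs k))\<^sup>2 \<le> 2 / real (Suc m) + 2 / real (Suc k)" for m k
  proof -
    have "f (sc (1/2) (vs m + vs k)) = 1" using vs(1)[of m] vs(1)[of k] by (simp add: M_def scl add)
    then have "sc (1/2) (vs m + vs k) \<in> M" by (simp add: M_def)
    then have "d2 \<le> (nm (sc (1/2) (vs m + vs k)))\<^sup>2" by (rule lower)
    also have "\<dots> = (nm (vs m + vs k))\<^sup>2 / 4" by (simp add: power_mult_distrib power2_eq_square)
    finally have "4 * d2 \<le> (nm (vs m + vs k))\<^sup>2" by simp
    moreover note parallelogram[of "vs m" "vs k"] vs(2)[of m] vs(2)[of k]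
    ultimately show ?thesis by simp
  qed
  have cauchy: "\<forall>e>0. \<exists>N. \<forall>m\<ge>N. \<forall>k\<ge>N. nm (vs m - vs k) < e"
  proof (intro allI impI)
    fix e :: real assume e: "0 < e"
    obtain N where N: "4 / e\<^sup>2 < real N" using reals_Archimedean2 by blast
    have N4: "4 / real (Suc N) < e\<^sup>2"
    proof -
      have "4 < e\<^sup>2 * real N" using N e by (simp add: field_simps)
      also have "\<dots> \<le> e\<^sup>2 * real (Suc N)" using e by simp
      finally show ?thesis by (simp add: field_simps)
    qed
    have "nm (vs m - vs k) < e" if "m \<ge> N" "k \<ge> N" for m k
    proof -
      have "2 / real (Suc m) \<le> 2 / real (Suc N)" using that by (simp add: frac_le)
      moreover have "2 / real (Suc k) \<le> 2 / real (Suc N)" using that by (simp add: frac_le)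
      ultimately have "(nm (vs m - vs k))\<^sup>2 < e\<^sup>2" using par[of m k] N4 by simp
      then show ?thesis using e by (simp add: power2_less_imp_less less_imp_le)
    qed
    then show "\<exists>N. \<forall>m\<ge>N. \<forall>k\<ge>N. nm (vs m - vs k) < e" by blast
  qed
  obtain w where w: "(\<lambda>m. nm (vs m - w)) \<longlonglongrightarrow> 0" using complete[OF cauchy] by blast
  have fw: "f w = 1"
  proof -
    have b: "cmod (f w - 1) \<le> K * nm (vs m - w)" for m
    proof -
      have "f w - 1 = f (w - vs m)" using vs(1)[of m] by (simp add: M_def fdiff)
      then show ?thesis using bnd[of "w - vs m"] by (simp add: nm_commute)
    qed
    have "(\<lambda>m. K * nm (vs m - w)) \<longlonglongrightarrow> K * 0" by (intro tendsto_intros w)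
    then have "cmod (f w - 1) \<le> K * 0" by (rule LIMSEQ_le_const) (use b in blast)
    then show ?thesis by simp
  qed
  then have wM: "w \<in> M" by (simp add: M_def)
  have inv: "(\<lambda>k. 1 / real (Suc k)) \<longlonglongrightarrow> 0"
    using LIMSEQ_inverse_real_of_nat by (simp add: inverse_eq_divide)
  have wmin: "(nm w)\<^sup>2 \<le> d2"
  proof -
    have b: "nm w \<le> sqrt (d2 + 1 / real (Suc m)) + nm (vs m - w)" for m
    proof -
      have "nm w = nm (vs m - (vs m - w))" by simp
      also have "\<dots> \<le> nm (vs m) + nm (vs m - w)" by (rule triangle_diff)
      also have "nm (vs m) \<le> sqrt (d2 + 1 / real (Suc m))"
        using vs(2)[of m] by (simp add: real_le_rsqrt less_imp_le)
      finally show ?thesis by simp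
    qed
    have "(\<lambda>m. sqrt (d2 + 1 / real (Suc m)) + nm (vs m - w)) \<longlonglongrightarrow> sqrt (d2 + 0) + 0"
      by (intro tendsto_intros inv w)
    then have "nm w \<le> sqrt (d2 + 0) + 0" by (rule LIMSEQ_le_const) (use b in blast)
    then have "nm w \<le> sqrt d2" by simp
    then have "(nm w)\<^sup>2 \<le> (sqrt d2)\<^sup>2" by (simp add: power_mono)
    then show ?thesis using d2nn by simp
  qed
  have minimal: "(nm w)\<^sup>2 \<le> (nm v)\<^sup>2" if "v \<in> M" for v using wmin lower[OF that] by linarith
  have orth: "ip w z = 0" if fz: "f z = 0" for z
  proof (rule ccontr)
    assume p0: "ip w z \<noteq> 0"
    define p where "p = ip w z"
    define Z where "Z = (nm z)\<^sup>2"
    define s where "s = 1 / (Z + 1)"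
    define t where "t = complex_of_real s * p"
    have Z0: "0 \<le> Z" by (simp add: Z_def)
    have s0: "0 < s" using Z0 by (simp add: s_def)
    have sZ: "s * Z < 1" using Z0 by (simp add: s_def field_simps)
    have a0: "0 < (cmod p)\<^sup>2" using p0 by (simp add: p_def)
    have "w - sc t z \<in> M" using fw fz by (simp add: M_def fdiff scl)
    then have m: "(nm w)\<^sup>2 \<le> (nm (w - sc t z))\<^sup>2" by (rule minimal)
    have ct: "cnj t * p = of_real (s * (cmod p)\<^sup>2)"
    proof -
      have "cnj p * p = of_real ((cmod p)\<^sup>2)" by (metis complex_norm_square mult.commute)
      then show ?thesis by (simp add: t_def mult.assoc)
    qed
    have nt: "cmod t = s * cmod p" using s0 by (simp add: t_def norm_mult)
    have "(nm (w - sc t z))\<^sup>2 = (nm w)\<^sup>2 - 2 * Re (cnj t * p) + (cmod t)\<^sup>2 * Z"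
      unfolding nm_diff_sq by (simp add: p_def Z_def power_mult_distrib)
    also have "\<dots> = (nm w)\<^sup>2 - 2 * (s * (cmod p)\<^sup>2) + (s * (cmod p)\<^sup>2) * (s * Z)"
      unfolding ct nt by (simp add: power2_eq_square mult_ac)
    finally have "0 \<le> (s * (cmod p)\<^sup>2) * (s * Z) - 2 * (s * (cmod p)\<^sup>2)" using m by linarith
    moreover have "(s * (cmod p)\<^sup>2) * (s * Z) < (s * (cmod p)\<^sup>2) * 2"
      by (rule mult_strict_left_mono) (use sZ s0 a0 in auto)
    ultimately show False by linarith
  qed
  have w0: "w \<noteq> 0" using fw f0 by auto
  then have ww: "ip w w \<noteq> 0" using ip_self[of w] by simp
  show ?thesis
  proof (intro exI allI)
    fix v
    have "f (v - sc (f v) w) = 0" using fw by (simp add: fdiff scl)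
    then have "ip w (v - sc (f v) w) = 0" by (rule orth)
    then have "ip (v - sc (f v) w) w = 0" by (metis ip_sym complex_cnj_zero)
    then have "ip v w = f v * ip w w" by simp
    then show "f v = ip v (sc (cnj (1 / ip w w)) w)" using ww by (simp add: field_simps)
  qed
qed

end



context hs begin

lemma sval_small: assumes "bop sc ip A" "1 \<le> k" "sval sc ip k A < e"
  shows "\<exists>X. bop sc ip X \<and> rank_lt sc X k \<and> opnorm ip (\<lambda>v. A v - X v) < e"
proof (rule ccontr)
  assume "\<not> ?thesis"
  then have "e \<le> sval sc ip k A" by (intro sval_ge[OF assms(2)]) (auto simp: not_less)
  with assms(3) show False by simp
qed

lemma rank2_unit: assumes "rank_lt sc X 2" "nm e = 1" shows "\<exists>b. nm b = 1 \<and> (\<forall>w. \<exists>l. X w = sc l b)"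
proof -
  obtain S where S: "finite S" "card S < 2" "range X \<subseteq> module.span sc S"
    using assms(1) unfolding rank_lt_def by blast
  show ?thesis
  proof (cases "range X \<subseteq> {0}")
    case True
    then have "X w = sc 0 e" for w by auto
    then show ?thesis using assms(2) by blast
  next
    case False
    then have "S \<noteq> {}" using S(3) module.span_empty[OF md] by auto
    then have "card S = 1" using S(1,2) card_0_eq[OF S(1)] by linarith
    then obtain s0 where s0: "S = {s0}" by (rule card_1_singletonE)
    then have sp: "range X \<subseteq> range (\<lambda>k. sc k s0)" using S(3) module.span_singleton[OF md, of s0] by simp
    have s00: "s0 \<noteq> 0"
    proof
      assume "s0 = 0"
      then have "range X \<subseteq> {0}" using sp by auto
      then show False using False by simp
    qed
    then have ns: "0 < nm s0" by (rule nm_pos)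
    define b where "b = sc (of_real (1 / nm s0)) s0"
    have nb: "nm b = 1" using s00 by (simp add: b_def norm_divide)
    have "\<exists>l. X w = sc l b" for w
    proof -
      obtain k where k: "X w = sc k s0" using sp by blast
      have "sc (k * of_real (nm s0)) b = sc k s0" using ns by (simp add: b_def)
      then show ?thesis using k by metis
    qed
    then show ?thesis using nb by blast
  qed
qed

lemma best_approx: assumes "nm b = 1" shows "nm (z - sc (ip z b) b) \<le> nm (z - sc l b)"
proof -
  have bb: "ip b b = 1" using assms by (simp add: ip_self)
  have o: "ip (z - sc (ip z b) b) (sc (ip z b - l) b) = 0" using bb by simp
  have eq: "z - sc l b = (z - sc (ip z b) b) + sc (ip z b - l) b" by (simp add: sc_left_diff)
  have "(nm (z - sc l b))\<^sup>2 = (nm (z - sc (ip z b) b))\<^sup>2 + (nm (sc (ip z b - l) b))\<^sup>2"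
    by (subst eq) (rule pythag[OF o])
  then have "(nm (z - sc (ip z b) b))\<^sup>2 \<le> (nm (z - sc l b))\<^sup>2" by simp
  then show ?thesis by (rule power2_le_imp_le) simp
qed

lemma rank_one: assumes A: "bop sc ip A" and s2: "sval sc ip 2 A = 0" shows "\<exists>x y. A = outer sc ip x y"
proof (cases "A = (\<lambda>_. 0)")
  case True
  then show ?thesis using outer_zero_iff[of 0 0] by metis
next
  case False
  then obtain u where au: "A u \<noteq> 0" by auto
  define a where "a = A u"
  have a0: "a \<noteq> 0" using au a_def by simp
  have na: "0 < nm a" using nm_pos[OF a0] .
  have aa: "ip a a \<noteq> 0" using a0 ip_self[of a] by simp
  have key: "A v = sc (ip (A v) a / ip a a) a" for v
  proof (rule ccontr)
    assume neq: "A v \<noteq> sc (ip (A v) a / ip a a) a"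
    define t where "t = ip (A v) a / ip a a"
    define v' where "v' = v - sc t u"
    define r where "r = A v'"
    have r_eq: "r = A v - sc t a" by (simp add: r_def v'_def a_def bop_diff[OF A] bop_scale[OF A])
    have r0: "r \<noteq> 0" using neq r_eq t_def by simp
    have ra: "ip r a = 0" using aa by (simp add: r_eq t_def)
    have nr: "0 < nm r" using nm_pos[OF r0] .
    define U where "U = nm u"
    define V where "V = nm v'"
    define e where "e = min (nm a / (2 * (U + 1))) (nm r / (2 * (V + 1)))"
    have U0: "0 \<le> U" and V0: "0 \<le> V" by (simp_all add: U_def V_def)
    have e0: "0 < e" using na nr U0 V0 by (simp add: e_def)
    have eU: "e * U \<le> nm a / 2"
    proof -
      have "e \<le> nm a / (2 * (U + 1))" by (simp add: e_def)
      then have "e * (2 * (U + 1)) \<le> nm a" using U0 by (simp add: pos_le_divide_eq)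
      then show ?thesis using e0 by (simp add: algebra_simps)
    qed
    have eV: "e * V \<le> nm r / 2"
    proof -
      have "e \<le> nm r / (2 * (V + 1))" by (simp add: e_def)
      then have "e * (2 * (V + 1)) \<le> nm r" using V0 by (simp add: pos_le_divide_eq)
      then show ?thesis using e0 by (simp add: algebra_simps)
    qed
    obtain X where X: "bop sc ip X" "rank_lt sc X 2" "opnorm ip (\<lambda>v. A v - X v) < e"
      using sval_small[OF A _, of 2 e] s2 e0 by auto
    have "nm (sc (of_real (1 / nm a)) a) = 1" using a0 by (simp add: norm_divide)
    then obtain b where b: "nm b = 1" "\<And>w. \<exists>l. X w = sc l b" using rank2_unit[OF X(2)] by blast
    define D where "D = (\<lambda>v. A v - X v)"
    have Dbop: "bop sc ip D" using bop_diff_op[OF A X(1)] D_def by simp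
    have dist: "nm (A w - sc (ip (A w) b) b) \<le> e * nm w" for w
    proof -
      obtain l where l: "X w = sc l b" using b(2) by blast
      have "nm (A w - sc (ip (A w) b) b) \<le> nm (A w - X w)" unfolding l by (rule best_approx[OF b(1)])
      also have "\<dots> \<le> opnorm ip D * nm w" using opnorm_bound[OF Dbop, of w] by (simp add: D_def)
      also have "\<dots> \<le> e * nm w" using X(3) by (simp add: D_def mult_right_mono less_imp_le)
      finally show ?thesis .
    qed
    define \<alpha> where "\<alpha> = ip a b"
    define \<rho> where "\<rho> = ip r b"
    define qa where "qa = a - sc \<alpha> b"
    define qr where "qr = r - sc \<rho> b"
    have "nm qa \<le> e * U" using dist[of u] unfolding qa_def \<alpha>_def a_def U_def .
    then have qa_le: "nm qa \<le> nm a / 2" using eU by linarith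
    have "nm qr \<le> e * V" using dist[of v'] unfolding qr_def \<rho>_def r_def V_def .
    then have qr_le: "nm qr \<le> nm r / 2" using eV by linarith
    have bb: "ip b b = 1" using b(1) by (simp add: ip_self)
    have qab: "ip qa b = 0" using bb by (simp add: qa_def \<alpha>_def)
    have qrb: "ip qr b = 0" using bb by (simp add: qr_def \<rho>_def)
    have bqa: "ip b qa = 0" using qab by (metis ip_sym complex_cnj_zero)
    have a_dec: "a = qa + sc \<alpha> b" by (simp add: qa_def)
    have r_dec: "r = qr + sc \<rho> b" by (simp add: qr_def)
    have "ip r a = ip (qr + sc \<rho> b) (qa + sc \<alpha> b)" using a_dec r_dec by simp
    also have "\<dots> = ip qr qa + \<rho> * cnj \<alpha>" by (simp add: qrb bqa bb)
    finally have "ip qr qa + \<rho> * cnj \<alpha> = 0" using ra by simp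
    then have "\<rho> * cnj \<alpha> = - ip qr qa" by (simp add: add_eq_0_iff)
    then have "cmod \<rho> * cmod \<alpha> = cmod (ip qr qa)" by (metis norm_minus_cancel norm_mult complex_mod_cnj)
    also have "\<dots> \<le> nm qr * nm qa" by (rule cs)
    also have "\<dots> \<le> (nm r / 2) * (nm a / 2)" using qr_le qa_le by (intro mult_mono) auto
    finally have P: "cmod \<rho> * cmod \<alpha> \<le> (nm r / 2) * (nm a / 2)" .
    have pa: "(nm a)\<^sup>2 = (nm qa)\<^sup>2 + (cmod \<alpha>)\<^sup>2"
      using pythag[of qa "sc \<alpha> b"] a_dec qab b(1) by simp
    have pr: "(nm r)\<^sup>2 = (nm qr)\<^sup>2 + (cmod \<rho>)\<^sup>2"
      using pythag[of qr "sc \<rho> b"] r_dec qrb b(1) by simp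
    have "(nm qa)\<^sup>2 \<le> (nm a / 2)\<^sup>2" using qa_le by (simp add: power_mono)
    then have h1: "3/4 * (nm a)\<^sup>2 \<le> (cmod \<alpha>)\<^sup>2" using pa by (simp add: power_divide)
    have "(nm qr)\<^sup>2 \<le> (nm r / 2)\<^sup>2" using qr_le by (simp add: power_mono)
    then have h2: "3/4 * (nm r)\<^sup>2 \<le> (cmod \<rho>)\<^sup>2" using pr by (simp add: power_divide)
    define RA where "RA = (nm r)\<^sup>2 * (nm a)\<^sup>2"
    have RA0: "0 < RA" unfolding RA_def using mult_pos_pos[OF zero_less_power[OF nr] zero_less_power[OF na]] .
    have "(3/4 * (nm r)\<^sup>2) * (3/4 * (nm a)\<^sup>2) \<le> (cmod \<rho>)\<^sup>2 * (cmod \<alpha>)\<^sup>2"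
      using h1 h2 by (intro mult_mono) auto
    then have l1: "9/16 * RA \<le> (cmod \<rho> * cmod \<alpha>)\<^sup>2" by (simp add: RA_def power_mult_distrib)
    have "(cmod \<rho> * cmod \<alpha>)\<^sup>2 \<le> ((nm r / 2) * (nm a / 2))\<^sup>2" using P by (simp add: power_mono)
    then have l2: "(cmod \<rho> * cmod \<alpha>)\<^sup>2 \<le> RA / 16" by (simp add: RA_def power_mult_distrib power_divide)
    from l1 l2 RA0 show False by linarith
  qed
  define f where "f v = ip (A v) a / ip a a" for v
  have fadd: "f (x + y) = f x + f y" for x y by (simp add: f_def bop_add[OF A] add_divide_distrib)
  have fscl: "f (sc c x) = c * f x" for c x by (simp add: f_def bop_scale[OF A])
  have caa: "cmod (ip a a) = (nm a)\<^sup>2" by (simp add: ip_self norm_power)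
  have fbnd: "cmod (f v) \<le> (opnorm ip A / nm a) * nm v" for v
  proof -
    have "cmod (f v) = cmod (ip (A v) a) / (nm a)\<^sup>2" by (simp add: f_def norm_divide caa)
    also have "\<dots> \<le> (opnorm ip A * nm v * nm a) / (nm a)\<^sup>2"
    proof (rule divide_right_mono)
      show "cmod (ip (A v) a) \<le> opnorm ip A * nm v * nm a"
        using cs[of "A v" a] mult_right_mono[OF opnorm_bound[OF A, of v] nm_nonneg[of a]] by linarith
    qed simp
    also have "\<dots> = (opnorm ip A / nm a) * nm v" using na by (simp add: power2_eq_square field_simps)
    finally show ?thesis .
  qed
  obtain y where y: "\<And>v. f v = ip v y" using riesz[OF fadd fscl fbnd] by blast
  have "A = outer sc ip a y"
  proof
    fix v show "A v = outer sc ip a y v" using key[of v] y[of v] by (simp add: f_def outer_def)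
  qed
  then show ?thesis by blast
qed

end



context hs begin

lemma cnorm_outer: "1 \<le> n \<Longrightarrow> cnorm sc ip c n (outer sc ip x y) = c 1 * (nm x * nm y)"
  using cnorm_rank1[of n "outer sc ip x y" c] bop_outer rank_lt_outer opnorm_outer by simp

lemma gap: assumes dp: "desc_pos c n" and n2: "2 \<le> n" and c2: "0 < c 2" and A: "bop sc ip A"
  and s: "sval sc ip 2 A \<noteq> 0"
  shows "c 1 * opnorm ip A < cnorm sc ip c n A"
proof -
  have n1: "1 \<le> n" using n2 by simp
  have s0: "0 < sval sc ip 2 A" using sval_nonneg[OF A, of 2] s by simp
  have "c 2 * sval sc ip 2 A \<le> (\<Sum>j=2..n. c j * sval sc ip j A)"
  proof (rule member_le_sum)
    show "2 \<in> {2..n}" using n2 by simp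
    fix x assume "x \<in> {2..n} - {2}"
    then have x: "1 \<le> x" "x \<le> n" by auto
    show "0 \<le> c x * sval sc ip x A"
      by (rule mult_nonneg_nonneg[OF less_imp_le[OF c_pos[OF dp x]] sval_nonneg[OF A x(1)]])
  qed simp
  moreover have "0 < c 2 * sval sc ip 2 A" using c2 s0 by simp
  ultimately show ?thesis using cnorm_split[OF n1, of c A] sval_1[OF A] by simp
qed

end

theorem corollary2p7:
  fixes sc :: "complex \<Rightarrow> 'a::ab_group_add \<Rightarrow> 'a"
    and ip :: "'a \<Rightarrow> 'a \<Rightarrow> complex"
    and c :: "nat \<Rightarrow> real" and n :: nat
  assumes H: "chilbert sc ip"
    and n1: "1 \<le> n"
    and dimH: "\<exists>B. finite B \<and> card B = n \<and> \<not> module.dependent sc B"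
  shows
   "(desc_pos c n \<longrightarrow>
      ((\<forall>A B. bop sc ip A \<and> bop sc ip B \<longrightarrow>
          cnorm sc ip c n (A \<circ> B) \<le> cnorm sc ip c n A * cnorm sc ip c n B)
       \<longleftrightarrow> 1 \<le> c 1))
  \<and> (desc_pos c n \<longrightarrow>
      ((\<forall>A. bop sc ip A \<and> \<not> rank_lt sc A 1 \<and> rank_lt sc A 2 \<longrightarrow>
          cnorm sc ip c n A = sval sc ip 1 A)
       \<longleftrightarrow> c 1 = 1))
  \<and> (desc_pos c n \<and> 1 \<le> c 1 \<longrightarrow>
      ((\<exists>A B. bop sc ip A \<and> bop sc ip B \<and> A \<noteq> (\<lambda>_. 0) \<and> B \<noteq> (\<lambda>_. 0) \<and>
          cnorm sc ip c n (A \<circ> B) = cnorm sc ip c n A * cnorm sc ip c n B)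
       \<longleftrightarrow> c 1 = 1))
  \<and> (c 1 = 1 \<and> (\<forall>j\<in>{2..n}. c j = 0) \<longrightarrow>
      (\<forall>A B. bop sc ip A \<and> bop sc ip B \<and> A \<noteq> (\<lambda>_. 0) \<and> B \<noteq> (\<lambda>_. 0) \<longrightarrow>
          (cnorm sc ip c n (A \<circ> B) = cnorm sc ip c n A * cnorm sc ip c n B
           \<longleftrightarrow> sval sc ip 1 (A \<circ> B) = sval sc ip 1 A * sval sc ip 1 B)))
  \<and> (desc_pos c n \<and> 2 \<le> n \<and> c 1 = 1 \<and> 0 < c 2 \<longrightarrow>
      (\<forall>A B. bop sc ip A \<and> bop sc ip B \<and> A \<noteq> (\<lambda>_. 0) \<and> B \<noteq> (\<lambda>_. 0) \<longrightarrow>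
          (cnorm sc ip c n (A \<circ> B) = cnorm sc ip c n A * cnorm sc ip c n B
           \<longleftrightarrow> (\<exists>x y z. x \<noteq> 0 \<and> y \<noteq> 0 \<and> z \<noteq> 0 \<and>
                  A = outer sc ip x y \<and> B = outer sc ip y z))))"
proof -
  interpret hs sc ip using H by (rule hs.intro)
  obtain e where e: "hnorm ip e = 1" using exists_unit[OF dimH n1] by blast
  define P where "P = outer sc ip e e"
  have Pb: "bop sc ip P" unfolding P_def by (rule bop_outer)
  have PP: "P \<circ> P = P" and Pn: "opnorm ip P = 1" and P0: "P \<noteq> (\<lambda>_. 0)"
    using unit_facts[OF e] unfolding P_def by auto
  have Pr: "rank_lt sc P 2" unfolding P_def by (rule rank_lt_outer)
  have cP: "cnorm sc ip c n P = c 1" using cnorm_rank1[OF n1 Pb Pr, of c] Pn by simp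
  have PAB: "cnorm sc ip c n (P \<circ> P) = cnorm sc ip c n P * cnorm sc ip c n P \<longleftrightarrow> c 1 = c 1 * c 1"
    using PP cP by simp

  have partA: "(\<forall>A B. bop sc ip A \<and> bop sc ip B \<longrightarrow>
          cnorm sc ip c n (A \<circ> B) \<le> cnorm sc ip c n A * cnorm sc ip c n B)
       \<longleftrightarrow> 1 \<le> c 1" if dp: "desc_pos c n"
  proof
    assume h: "\<forall>A B. bop sc ip A \<and> bop sc ip B \<longrightarrow>
          cnorm sc ip c n (A \<circ> B) \<le> cnorm sc ip c n A * cnorm sc ip c n B"
    have c1: "0 < c 1" using c_pos[OF dp, of 1] n1 by simp
    have "c 1 \<le> c 1 * c 1" using h[rule_format, OF conjI[OF Pb Pb]] PP cP by simp
    then show "1 \<le> c 1" using c1 by simp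
  next
    assume c1: "1 \<le> c 1"
    show "\<forall>A B. bop sc ip A \<and> bop sc ip B \<longrightarrow>
          cnorm sc ip c n (A \<circ> B) \<le> cnorm sc ip c n A * cnorm sc ip c n B"
    proof (intro allI impI, elim conjE)
      fix A B assume A: "bop sc ip A" and B: "bop sc ip B"
      have "opnorm ip A \<le> c 1 * opnorm ip A" using c1 opnorm_nonneg[OF A]
        by (metis mult_le_cancel_right1 mult.commute not_le order.strict_trans2 zero_less_one)
      also have "\<dots> \<le> cnorm sc ip c n A" by (rule cnorm_ge[OF dp n1 A])
      finally have oA: "opnorm ip A \<le> cnorm sc ip c n A" .
      have "cnorm sc ip c n (A \<circ> B) \<le> opnorm ip A * cnorm sc ip c n B" by (rule cnorm_comp_left[OF dp A B])
      also have "\<dots> \<le> cnorm sc ip c n A * cnorm sc ip c n B"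
        by (rule mult_right_mono[OF oA cnorm_nonneg[OF dp n1 B]])
      finally show "cnorm sc ip c n (A \<circ> B) \<le> cnorm sc ip c n A * cnorm sc ip c n B" .
    qed
  qed

  have partB: "(\<forall>A. bop sc ip A \<and> \<not> rank_lt sc A 1 \<and> rank_lt sc A 2 \<longrightarrow>
          cnorm sc ip c n A = sval sc ip 1 A) \<longleftrightarrow> c 1 = 1" if dp: "desc_pos c n"
  proof
    assume h: "\<forall>A. bop sc ip A \<and> \<not> rank_lt sc A 1 \<and> rank_lt sc A 2 \<longrightarrow>
          cnorm sc ip c n A = sval sc ip 1 A"
    have "\<not> rank_lt sc P 1" using P0 rank_lt_1 by blast
    then have "cnorm sc ip c n P = sval sc ip 1 P" using h Pb Pr by blast
    then show "c 1 = 1" using cP sval_1[OF Pb] Pn by simp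
  next
    assume c1: "c 1 = 1"
    show "\<forall>A. bop sc ip A \<and> \<not> rank_lt sc A 1 \<and> rank_lt sc A 2 \<longrightarrow>
          cnorm sc ip c n A = sval sc ip 1 A"
      using cnorm_rank1[OF n1] sval_1 c1 by auto
  qed

  have partC: "(\<exists>A B. bop sc ip A \<and> bop sc ip B \<and> A \<noteq> (\<lambda>_. 0) \<and> B \<noteq> (\<lambda>_. 0) \<and>
          cnorm sc ip c n (A \<circ> B) = cnorm sc ip c n A * cnorm sc ip c n B) \<longleftrightarrow> c 1 = 1"
    if dp: "desc_pos c n" and c1: "1 \<le> c 1"
  proof
    assume "\<exists>A B. bop sc ip A \<and> bop sc ip B \<and> A \<noteq> (\<lambda>_. 0) \<and> B \<noteq> (\<lambda>_. 0) \<and>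
          cnorm sc ip c n (A \<circ> B) = cnorm sc ip c n A * cnorm sc ip c n B"
    then obtain A B where A: "bop sc ip A" and B: "bop sc ip B" and A0: "A \<noteq> (\<lambda>_. 0)"
      and B0: "B \<noteq> (\<lambda>_. 0)" and eq: "cnorm sc ip c n (A \<circ> B) = cnorm sc ip c n A * cnorm sc ip c n B"
      by blast
    show "c 1 = 1"
    proof (rule ccontr)
      assume "c 1 \<noteq> 1"
      then have c1': "1 < c 1" using c1 by simp
      have oA: "0 < opnorm ip A" by (rule opnorm_pos[OF A A0])
      have oB: "0 < opnorm ip B" by (rule opnorm_pos[OF B B0])
      have cB: "0 < cnorm sc ip c n B"
        using cnorm_ge[OF dp n1 B] mult_pos_pos[OF _ oB, of "c 1"] c1' by linarith
      have "cnorm sc ip c n (A \<circ> B) \<le> opnorm ip A * cnorm sc ip c n B" by (rule cnorm_comp_left[OF dp A B])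
      also have "\<dots> < (c 1 * opnorm ip A) * cnorm sc ip c n B"
        using oA cB c1' by (intro mult_strict_right_mono) auto
      also have "\<dots> \<le> cnorm sc ip c n A * cnorm sc ip c n B"
        by (rule mult_right_mono[OF cnorm_ge[OF dp n1 A]]) (use cB in simp)
      finally show False using eq by simp
    qed
  next
    assume "c 1 = 1"
    then show "\<exists>A B. bop sc ip A \<and> bop sc ip B \<and> A \<noteq> (\<lambda>_. 0) \<and> B \<noteq> (\<lambda>_. 0) \<and>
          cnorm sc ip c n (A \<circ> B) = cnorm sc ip c n A * cnorm sc ip c n B"
      using Pb P0 PAB by auto
  qed

  have partD: "\<forall>A B. bop sc ip A \<and> bop sc ip B \<and> A \<noteq> (\<lambda>_. 0) \<and> B \<noteq> (\<lambda>_. 0) \<longrightarrow>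
          (cnorm sc ip c n (A \<circ> B) = cnorm sc ip c n A * cnorm sc ip c n B
           \<longleftrightarrow> sval sc ip 1 (A \<circ> B) = sval sc ip 1 A * sval sc ip 1 B)"
    if c1: "c 1 = 1" and cz: "\<forall>j\<in>{2..n}. c j = 0"
  proof -
    have "cnorm sc ip c n X = sval sc ip 1 X" for X
      using cnorm_split[OF n1, of c X] c1 cz by simp
    then show ?thesis by simp
  qed

  have partE: "\<forall>A B. bop sc ip A \<and> bop sc ip B \<and> A \<noteq> (\<lambda>_. 0) \<and> B \<noteq> (\<lambda>_. 0) \<longrightarrow>
          (cnorm sc ip c n (A \<circ> B) = cnorm sc ip c n A * cnorm sc ip c n B
           \<longleftrightarrow> (\<exists>x y z. x \<noteq> 0 \<and> y \<noteq> 0 \<and> z \<noteq> 0 \<and>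
                  A = outer sc ip x y \<and> B = outer sc ip y z))"
    if dp: "desc_pos c n" and n2: "2 \<le> n" and c1: "c 1 = 1" and c2: "0 < c 2"
  proof (intro allI impI, elim conjE)
    fix A B assume A: "bop sc ip A" and B: "bop sc ip B" and A0: "A \<noteq> (\<lambda>_. 0)" and B0: "B \<noteq> (\<lambda>_. 0)"
    show "cnorm sc ip c n (A \<circ> B) = cnorm sc ip c n A * cnorm sc ip c n B
           \<longleftrightarrow> (\<exists>x y z. x \<noteq> 0 \<and> y \<noteq> 0 \<and> z \<noteq> 0 \<and> A = outer sc ip x y \<and> B = outer sc ip y z)"
    proof
      assume eq: "cnorm sc ip c n (A \<circ> B) = cnorm sc ip c n A * cnorm sc ip c n B"
      have oA: "0 < opnorm ip A" by (rule opnorm_pos[OF A A0])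
      have oB: "0 < opnorm ip B" by (rule opnorm_pos[OF B B0])
      have cA: "0 < cnorm sc ip c n A" using cnorm_ge[OF dp n1 A] oA c1 by simp
      have cB: "0 < cnorm sc ip c n B" using cnorm_ge[OF dp n1 B] oB c1 by simp
      have sA: "sval sc ip 2 A = 0"
      proof (rule ccontr)
        assume "sval sc ip 2 A \<noteq> 0"
        then have g: "opnorm ip A < cnorm sc ip c n A" using gap[OF dp n2 c2 A] c1 by simp
        have "cnorm sc ip c n (A \<circ> B) \<le> opnorm ip A * cnorm sc ip c n B" by (rule cnorm_comp_left[OF dp A B])
        also have "\<dots> < cnorm sc ip c n A * cnorm sc ip c n B" using g cB by simp
        finally show False using eq by simp
      qed
      have sB: "sval sc ip 2 B = 0"
      proof (rule ccontr)
        assume "sval sc ip 2 B \<noteq> 0"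
        then have g: "opnorm ip B < cnorm sc ip c n B" using gap[OF dp n2 c2 B] c1 by simp
        have "cnorm sc ip c n (A \<circ> B) \<le> cnorm sc ip c n A * opnorm ip B" by (rule cnorm_comp_right[OF dp A B])
        also have "\<dots> < cnorm sc ip c n A * cnorm sc ip c n B" using g cA by simp
        finally show False using eq by simp
      qed
      obtain x y where Axy: "A = outer sc ip x y" using rank_one[OF A sA] by blast
      obtain w z where Bwz: "B = outer sc ip w z" using rank_one[OF B sB] by blast
      have x0: "x \<noteq> 0" and y0: "y \<noteq> 0" using A0 Axy outer_zero_iff by blast+
      have w0: "w \<noteq> 0" and z0: "z \<noteq> 0" using B0 Bwz outer_zero_iff by blast+
      have "cnorm sc ip c n (A \<circ> B) = cmod (ip w y) * hnorm ip x * hnorm ip z"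
        unfolding Axy Bwz outer_comp cnorm_outer[OF n1] c1 by simp
      moreover have "cnorm sc ip c n A * cnorm sc ip c n B = (hnorm ip w * hnorm ip y) * hnorm ip x * hnorm ip z"
        unfolding Axy Bwz cnorm_outer[OF n1] c1 by simp
      ultimately have "cmod (ip w y) * (hnorm ip x * hnorm ip z) = (hnorm ip w * hnorm ip y) * (hnorm ip x * hnorm ip z)"
        using eq by (simp add: mult_ac) metis
      moreover have "0 < hnorm ip x * hnorm ip z" using nm_pos[OF x0] nm_pos[OF z0] by simp
      ultimately have cseq: "cmod (ip w y) = hnorm ip w * hnorm ip y" using x0 z0 by simp
      define l where "l = ip w y / ip y y"
      have wl: "w = sc l y" using cs_eq[OF y0 cseq] l_def by simp
      have l0: "l \<noteq> 0" using w0 wl by auto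
      have "B = outer sc ip y (sc (cnj l) z)" using Bwz wl outer_scale by simp
      moreover have "sc (cnj l) z \<noteq> 0" using l0 z0 by simp
      ultimately show "\<exists>x y z. x \<noteq> 0 \<and> y \<noteq> 0 \<and> z \<noteq> 0 \<and> A = outer sc ip x y \<and> B = outer sc ip y z"
        using x0 y0 Axy by blast
    next
      assume "\<exists>x y z. x \<noteq> 0 \<and> y \<noteq> 0 \<and> z \<noteq> 0 \<and> A = outer sc ip x y \<and> B = outer sc ip y z"
      then obtain x y z where Axy: "A = outer sc ip x y" and Byz: "B = outer sc ip y z" by blast
      have "cnorm sc ip c n (A \<circ> B) = cmod (ip y y) * hnorm ip x * hnorm ip z"
        unfolding Axy Byz outer_comp cnorm_outer[OF n1] c1 by simp
      also have "cmod (ip y y) = (hnorm ip y)\<^sup>2" by (simp add: ip_self norm_power)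
      finally show "cnorm sc ip c n (A \<circ> B) = cnorm sc ip c n A * cnorm sc ip c n B"
        unfolding Axy Byz cnorm_outer[OF n1] c1 by (simp add: mult_ac power2_eq_square comp_def)
    qed
  qed

  show ?thesis
    apply (intro conjI impI)
    subgoal by (rule partA)
    subgoal by (rule partB)
    subgoal by (elim conjE) (rule partC)
    subgoal by (elim conjE) (rule partD)
    subgoal by (elim conjE) (rule partE)
    done
qed


end
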